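(* Let $r\ge 0$, $k\ge r$ and $t>r+1$ be integers, and let $\Omega=\lfloor tr/(t-1)\rfloor+1$, $a=t(r+1)+(1-t)\Omega$, $b=t-1-a$. Then \[t\binom{k+2-(r+1)}{2}-b\binom{k+2-\Omega}{2}-a\binom{k+2-(\Omega+1)}{2}=\binom{k+2}{2}-\binom{r+2}{2}-\sum_{j=1}^{k-r}(r+j+1-j\,t)_+ .\]
   Context: $(x)_+=\max(x,0)$; an empty sum is $0$. Binomial coefficients follow the convention $\binom{m}{2}=m(m-1)/2$ for integers $m\ge 2$ and $\binom{m}{2}=0$ for $m<2$. *)

theory Defs
  imports Complex_Main
begin

definition binom2 :: "int \<Rightarrow> int" where
  "binom2 m = (if m \<ge> 2 then m * (m - 1) div 2 else 0)"

definition pos_part :: "int \<Rightarrow> int" where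
  "pos_part x = max x 0"

end

theory Submission
  imports Defs
begin

lemma binom2_twice: "m \<ge> 0 \<Longrightarrow> 2 * binom2 m = m * (m - 1)"
proof -
  assume "m \<ge> 0"
  have ev: "even (m * (m - 1))" by simp
  show ?thesis
  proof (cases "m \<ge> 2")
    case True thus ?thesis using ev unfolding binom2_def by simp
  next
    case False
    with \<open>m \<ge> 0\<close> have "m = 0 \<or> m = 1" by auto
    thus ?thesis unfolding binom2_def by auto
  qed
qed

theorem lemma4p3:
  fixes r k t :: int
  assumes "r \<ge> 0" and "k \<ge> r" and "t > r + 1"
  shows "let Om = \<lfloor>of_int (t * r) / (of_int (t - 1) :: real)\<rfloor> + 1;
             a = t * (r + 1) + (1 - t) * Om;
             b = t - 1 - a
         in t * binom2 (k + 2 - (r + 1)) - b * binom2 (k + 2 - Om)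
              - a * binom2 (k + 2 - (Om + 1))
            = binom2 (k + 2) - binom2 (r + 2)
              - (\<Sum>j\<in>{1..k - r}. pos_part (r + j + 1 - j * t))"
proof -
  have tpos: "(of_int (t - 1) :: real) > 0" using assms by simp
  have "\<lfloor>of_int (t * r) / (of_int (t - 1) :: real)\<rfloor> = r"
  proof (subst floor_eq_iff, rule conjI)
    have "of_int r * of_int (t - 1) \<le> (of_int (t * r) :: real)"
      using assms by (simp add: algebra_simps)
    thus "of_int r \<le> of_int (t * r) / (of_int (t - 1) :: real)"
      using tpos by (simp add: pos_le_divide_eq)
    have "(of_int (t * r) :: real) < (of_int r + 1) * of_int (t - 1)"
    proof -
      have "t * r < (r + 1) * (t - 1)" using assms by (simp add: algebra_simps)
      hence "(of_int (t * r) :: real) < of_int ((r + 1) * (t - 1))" by linarith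
      thus ?thesis by simp
    qed
    thus "of_int (t * r) / (of_int (t - 1) :: real) < of_int r + 1"
      using tpos by (simp add: pos_divide_less_eq)
  qed
  moreover have "(\<Sum>j\<in>{1..k - r}. pos_part (r + j + 1 - j * t)) = 0"
  proof (rule sum.neutral, rule ballI)
    fix j assume "j \<in> {1..k - r}"
    hence j: "j \<ge> 1" by simp
    have "j * (t - 1) \<ge> 1 * (t - 1)" using j assms by (intro mult_right_mono) auto
    hence "r + j + 1 - j * t \<le> 0" using assms by (simp add: algebra_simps)
    thus "pos_part (r + j + 1 - j * t) = 0" unfolding pos_part_def by simp
  qed
  moreover have "2 * (t * binom2 (k + 2 - (r + 1)) - (t - 1 - (r + 1)) * binom2 (k + 2 - (r + 1))
              - (r + 1) * binom2 (k + 2 - (r + 1 + 1)))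
      = 2 * (binom2 (k + 2) - binom2 (r + 2))"
  proof -
    have e1: "2 * binom2 (k + 2 - (r + 1)) = (k + 1 - r) * (k - r)"
      using binom2_twice[of "k + 2 - (r + 1)"] assms by (simp add: algebra_simps)
    have e2: "2 * binom2 (k + 2 - (r + 1 + 1)) = (k - r) * (k - r - 1)"
      using binom2_twice[of "k + 2 - (r + 1 + 1)"] assms by (simp add: algebra_simps)
    have e3: "2 * binom2 (k + 2) = (k + 2) * (k + 1)"
      using binom2_twice[of "k + 2"] assms by (simp add: algebra_simps)
    have e4: "2 * binom2 (r + 2) = (r + 2) * (r + 1)"
      using binom2_twice[of "r + 2"] assms by (simp add: algebra_simps)
    have "2 * (t * binom2 (k + 2 - (r + 1)) - (t - 1 - (r + 1)) * binom2 (k + 2 - (r + 1))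
              - (r + 1) * binom2 (k + 2 - (r + 1 + 1)))
        = (r + 2) * (2 * binom2 (k + 2 - (r + 1))) - (r + 1) * (2 * binom2 (k + 2 - (r + 1 + 1)))"
      by (simp add: algebra_simps)
    also have "\<dots> = (r + 2) * ((k + 1 - r) * (k - r)) - (r + 1) * ((k - r) * (k - r - 1))"
      using e1 e2 by simp
    also have "\<dots> = (k + 2) * (k + 1) - (r + 2) * (r + 1)" by (simp add: algebra_simps)
    also have "\<dots> = 2 * (binom2 (k + 2) - binom2 (r + 2))" using e3 e4 by simp
    finally show ?thesis .
  qed
  ultimately show ?thesis by (simp add: Let_def algebra_simps)
qed

end
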